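(* Let $L>0$ and assume there are continuous functions $f:[-L,L]\times[0,\infty)\to\mathbb{R}$, $g:[0,\infty)\to\mathbb{R}$ and a constant $K>0$ such that (i) $g(0)>0$, $g$ is strictly increasing, and with $G(s):=\int_K^sg(t)\,dt$ one has $\lim_{s\to\infty}s/\sqrt{G(s)}=0$; (ii) $f(x,s)\ge g(s)$ for all $s\ge K$, $x\in[-L,L]$. Let $\lambda_0=(\pi/L)^2$. Then: (a) there exists $A>0$ such that $f(x,s)\ge\lambda_0s-A$ for all $s\ge0$ and all $x\in[-L,L]$; (b) for every $R>K$, $$\int_0^R\frac{ds}{\sqrt{G(R)-G(s)}}\le\frac{2R}{\sqrt{G(R)}}.$$ *)

theory Defs
  imports "HOL-Analysis.Analysis"
begin

text \<open>Oriented primitive G(s) = integral from K to s of g (negative of the integral over [s,K] if s < K).\<close>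
definition primG :: "(real \<Rightarrow> real) \<Rightarrow> real \<Rightarrow> real \<Rightarrow> real" where
  "primG g K s = (LBINT t=ereal K..ereal s. g t)"

end

theory Submission
  imports Defs
begin

lemma G_facts:
  fixes g :: "real \<Rightarrow> real" and K :: real
  assumes K: "K > 0"
    and gcont: "continuous_on {0..} g"
    and gmono: "strict_mono_on {0..} g"
  defines "P \<equiv> (\<lambda>s. integral {0..s} g)"
  shows G_eq: "\<And>s. s \<ge> 0 \<Longrightarrow> primG g K s = P s - P K"
    and P_diff: "\<And>a b. 0 \<le> a \<Longrightarrow> a \<le> b \<Longrightarrow> P b - P a = integral {a..b} g"
    and low: "\<And>a b. 0 \<le> a \<Longrightarrow> a \<le> b \<Longrightarrow> (b-a) * g a \<le> integral {a..b} g"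
    and up: "\<And>a b. 0 \<le> a \<Longrightarrow> a \<le> b \<Longrightarrow> integral {a..b} g \<le> (b-a) * g b"
proof -
  have mono: "\<And>x y. 0 \<le> x \<Longrightarrow> x \<le> y \<Longrightarrow> g x \<le> g y"
    using gmono by (meson atLeast_iff order_trans strict_mono_on_leD)
  have cI: "\<And>a b. 0 \<le> a \<Longrightarrow> continuous_on {a..b} g"
    using gcont by (rule continuous_on_subset) auto
  have intg: "\<And>a b. 0 \<le> a \<Longrightarrow> g integrable_on {a..b}"
    using cI integrable_continuous_real by blast
  show P_diff: "\<And>a b. 0 \<le> a \<Longrightarrow> a \<le> b \<Longrightarrow> P b - P a = integral {a..b} g"
  proof -
    fix a b :: real assume a: "0 \<le> a" "a \<le> b"
    have "integral {0..a} g + integral {a..b} g = integral {0..b} g"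
      using Henstock_Kurzweil_Integration.integral_combine[of 0 a b g] a intg by auto
    then show "P b - P a = integral {a..b} g" unfolding P_def by linarith
  qed
  show "\<And>a b. 0 \<le> a \<Longrightarrow> a \<le> b \<Longrightarrow> (b-a) * g a \<le> integral {a..b} g"
  proof -
    fix a b :: real assume a: "0 \<le> a" "a \<le> b"
    have "integral {a..b} (\<lambda>_. g a) \<le> integral {a..b} g"
      by (rule integral_le) (use a intg mono in auto)
    then show "(b-a) * g a \<le> integral {a..b} g" using a by simp
  qed
  show "\<And>a b. 0 \<le> a \<Longrightarrow> a \<le> b \<Longrightarrow> integral {a..b} g \<le> (b-a) * g b"
  proof -
    fix a b :: real assume a: "0 \<le> a" "a \<le> b"
    have "integral {a..b} g \<le> integral {a..b} (\<lambda>_. g b)"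
      by (rule integral_le) (use a intg mono in auto)
    then show "integral {a..b} g \<le> (b-a) * g b" using a by simp
  qed
  show "\<And>s. s \<ge> 0 \<Longrightarrow> primG g K s = P s - P K"
  proof -
    fix s :: real assume s: "s \<ge> 0"
    define M where "M = max K s"
    have M0: "0 \<le> M" using s M_def by auto
    have "(LBINT t=ereal K..ereal s. g t) = P s - P K"
    proof (rule interval_integral_FTC_finite)
      show "continuous_on {min K s..max K s} g" using K s by (intro cI) auto
      fix x assume x: "min K s \<le> x" "x \<le> max K s"
      have "(P has_vector_derivative g x) (at x within {0..M})"
        unfolding P_def
        by (rule integral_has_vector_derivative) (use cI M0 x K s M_def in auto)
      then show "(P has_vector_derivative g x) (at x within {min K s..max K s})"
        by (rule has_vector_derivative_within_subset) (use K s M_def in auto)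
    qed
    then show "primG g K s = P s - P K" unfolding primG_def by simp
  qed
qed

theorem mainTheorem12:
  fixes f :: "real \<Rightarrow> real \<Rightarrow> real" and g :: "real \<Rightarrow> real" and L K :: real
  assumes L: "L > 0" and K: "K > 0"
    and fcont: "continuous_on ({-L..L} \<times> {0..}) (\<lambda>(x, s). f x s)"
    and gcont: "continuous_on {0..} g"
    and g0: "g 0 > 0"
    and gmono: "strict_mono_on {0..} g"
    and glim: "((\<lambda>s. s / sqrt (primG g K s)) \<longlongrightarrow> 0) at_top"
    and fg: "\<And>x s. x \<in> {-L..L} \<Longrightarrow> s \<ge> K \<Longrightarrow> f x s \<ge> g s"
  shows "(\<exists>A>0. \<forall>s\<ge>0. \<forall>x\<in>{-L..L}. f x s \<ge> (pi / L)^2 * s - A)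
       \<and> (\<forall>R>K. (\<integral>\<^sup>+ s\<in>{0..R}. ennreal (1 / sqrt (primG g K R - primG g K s)) \<partial>lborel)
                  \<le> ennreal (2 * R / sqrt (primG g K R)))"
proof -
  define P where "P = (\<lambda>s. integral {0..s} g)"
  define G where "G = primG g K"
  note GF = G_facts[OF K gcont gmono, folded P_def, folded G_def]
  have mono: "\<And>x y. 0 \<le> x \<Longrightarrow> x \<le> y \<Longrightarrow> g x \<le> g y"
    using gmono by (meson atLeast_iff order_trans strict_mono_on_leD)
  have gpos: "\<And>s. 0 \<le> s \<Longrightarrow> g s > 0"
    using mono g0 by (meson less_le_trans order_refl)
  have Gle: "\<And>s. 0 \<le> s \<Longrightarrow> G s \<le> s * g s"
  proof -
    fix s :: real assume s: "0 \<le> s"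
    show "G s \<le> s * g s"
    proof (cases "K \<le> s")
      case True
      have "G s = integral {K..s} g" using GF(1)[OF s] GF(2)[of K s] True K by simp
      also have "\<dots> \<le> (s - K) * g s" using GF(4)[of K s] True K by simp
      also have "\<dots> \<le> s * g s" using gpos[OF s] K by (simp add: mult_right_mono)
      finally show ?thesis .
    next
      case False
      have "G s = - integral {s..K} g" using GF(1)[OF s] GF(2)[of s K] False s by simp
      also have "\<dots> \<le> - ((K - s) * g s)" using GF(3)[of s K] False s by simp
      also have "\<dots> \<le> s * g s" using gpos[OF s] False s
        by (smt (verit) mult_nonneg_nonneg)
      finally show ?thesis .
    qed
  qed
  have Gpos: "\<And>R. R > K \<Longrightarrow> G R > 0"
  proof -
    fix R assume R: "R > K"
    have "G R = integral {K..R} g" using GF(1)[of R] GF(2)[of K R] R K by simp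
    also have "\<dots> \<ge> (R - K) * g K" using GF(3)[of K R] R K by simp
    finally show "G R > 0" using gpos[of K] K R by (smt (verit) mult_pos_pos)
  qed
  have partb: "\<forall>R>K. (\<integral>\<^sup>+ s\<in>{0..R}. ennreal (1 / sqrt (G R - G s)) \<partial>lborel)
                  \<le> ennreal (2 * R / sqrt (G R))"
  proof (intro allI impI)
    fix R assume R: "R > K"
    have GR: "G R > 0" using Gpos[OF R] .
    define c where "c = G R / R"
    have c: "c > 0" using GR R K c_def by simp
    have key: "\<And>s. 0 \<le> s \<Longrightarrow> s \<le> R \<Longrightarrow> c * (R - s) \<le> G R - G s"
    proof -
      fix s assume s: "0 \<le> s" "s \<le> R"
      define D where "D = G R - G s"
      have D: "D \<ge> (R - s) * g s"
        using GF(1)[of R] GF(1)[of s] GF(2)[of s R] GF(3)[of s R] s R K D_def by simp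
      have "s * D \<ge> s * ((R - s) * g s)" using D s by (simp add: mult_left_mono)
      moreover have "(R - s) * G s \<le> (R - s) * (s * g s)"
        using Gle[OF s(1)] s by (simp add: mult_left_mono)
      ultimately have "s * D \<ge> (R - s) * G s" by (simp add: algebra_simps)
      hence "R * D \<ge> (R - s) * G R" unfolding D_def by (simp add: algebra_simps)
      thus "c * (R - s) \<le> G R - G s" unfolding c_def D_def using R K
        by (simp add: field_simps)
    qed
    define h where "h = (\<lambda>s. 1 / sqrt (c * (R - s)))"
    define F where "F = (\<lambda>s. (- 2 / sqrt c) * sqrt (R - s))"
    have "(h has_integral F R - F 0) {0..R}"
    proof (rule fundamental_theorem_of_calculus_interior)
      show "0 \<le> R" using R K by simp
      show "continuous_on {0..R} F" unfolding F_def using c by (intro continuous_intros) auto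
      fix x assume x: "x \<in> {0<..<R}"
      have hx: "h x = 1 / (sqrt c * sqrt (R - x))" by (simp add: h_def real_sqrt_mult)
      have "(F has_real_derivative h x) (at x)"
        unfolding F_def hx using x c
        by (auto intro!: derivative_eq_intros simp: field_simps)
      then show "(F has_vector_derivative h x) (at x)"
        by (simp add: has_real_derivative_iff_has_vector_derivative)
    qed
    moreover have "F R - F 0 = 2 * R / sqrt (G R)"
    proof -
      have "sqrt c = sqrt (G R) / sqrt R" unfolding c_def by (simp add: real_sqrt_divide)
      moreover have "sqrt R * sqrt R = R" using R K by simp
      moreover have "F R - F 0 = 2 * sqrt R / sqrt c" by (simp add: F_def)
      moreover have "sqrt R > 0" "sqrt (G R) > 0" using R K GR by auto
      ultimately show ?thesis by (metis (no_types, lifting) divide_divide_eq_right times_divide_eq_right)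
    qed
    ultimately have hI: "(h has_integral 2 * R / sqrt (G R)) {0..R}" by simp
    have hnn: "\<And>x. x \<in> {0..R} \<Longrightarrow> 0 \<le> h x" unfolding h_def using c by simp
    have eq: "(\<integral>\<^sup>+ s\<in>{0..R}. ennreal (h s) \<partial>lborel) = ennreal (2 * R / sqrt (G R))"
      by (rule nn_integral_has_integral_lebesgue'[OF hnn hI])
    have pw: "\<And>s. s \<in> {0..R} \<Longrightarrow> 1 / sqrt (G R - G s) \<le> h s"
    proof -
      fix s assume s: "s \<in> {0..R}"
      show "1 / sqrt (G R - G s) \<le> h s"
      proof (cases "s = R")
        case True then show ?thesis unfolding h_def by simp
      next
        case False
        hence pos: "0 < c * (R - s)" using s c by simp
        have "c * (R - s) \<le> G R - G s" using key s by simp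
        hence "sqrt (c * (R - s)) \<le> sqrt (G R - G s)" by simp
        moreover have "0 < sqrt (c * (R - s))" using pos by simp
        ultimately show ?thesis unfolding h_def
          by (simp add: frac_le)
      qed
    qed
    have "(\<integral>\<^sup>+ s\<in>{0..R}. ennreal (1 / sqrt (G R - G s)) \<partial>lborel)
          \<le> (\<integral>\<^sup>+ s\<in>{0..R}. ennreal (h s) \<partial>lborel)"
      by (rule nn_integral_mono) (auto split: split_indicator intro!: ennreal_leI pw)
    then show "(\<integral>\<^sup>+ s\<in>{0..R}. ennreal (1 / sqrt (G R - G s)) \<partial>lborel)
                  \<le> ennreal (2 * R / sqrt (G R))" using eq by simp
  qed
  have parta: "\<exists>A>0. \<forall>s\<ge>0. \<forall>x\<in>{-L..L}. f x s \<ge> (pi / L)^2 * s - A"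
  proof -
    have "compact ((\<lambda>(x,s). f x s) ` ({-L..L} \<times> {0..K}))"
      by (rule compact_continuous_image)
         (auto intro: continuous_on_subset[OF fcont] compact_Times)
    then obtain B where B: "\<forall>y\<in>(\<lambda>(x,s). f x s) ` ({-L..L} \<times> {0..K}). \<bar>y\<bar> \<le> B"
      using compact_imp_bounded bounded_real by blast
    have fB: "\<And>x s. x \<in> {-L..L} \<Longrightarrow> 0 \<le> s \<Longrightarrow> s \<le> K \<Longrightarrow> f x s \<ge> - \<bar>B\<bar>"
    proof -
      fix x s assume "x \<in> {-L..L}" "0 \<le> s" "s \<le> K"
      hence "\<bar>f x s\<bar> \<le> B" using B by force
      thus "f x s \<ge> - \<bar>B\<bar>" by linarith
    qed
    define \<epsilon> where "\<epsilon> = L / pi"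
    have eps: "\<epsilon> > 0" using L by (simp add: \<epsilon>_def)
    have "eventually (\<lambda>s. s / sqrt (G s) < \<epsilon> \<and> s \<ge> K + 1) at_top"
      using order_tendstoD(2)[OF glim eps] eventually_ge_at_top[of "K+1"]
      unfolding G_def using eventually_conj by blast
    then obtain S0 where S0: "\<And>s. s \<ge> S0 \<Longrightarrow> s / sqrt (G s) < \<epsilon> \<and> s \<ge> K + 1"
      unfolding eventually_at_top_linorder by blast
    have big: "\<And>s. s \<ge> S0 \<Longrightarrow> (pi / L)^2 * s \<le> g s"
    proof -
      fix s assume s: "s \<ge> S0"
      have sK: "s \<ge> K + 1" and q: "s / sqrt (G s) < \<epsilon>" using S0[OF s] by auto
      have Gs: "G s > 0" using Gpos[of s] sK by simp
      have sq: "sqrt (G s) > 0" using Gs by simp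
      have "s < \<epsilon> * sqrt (G s)" using q sq by (simp add: divide_less_eq)
      hence "s^2 < (\<epsilon> * sqrt (G s))^2" using sK K
        by (intro power_strict_mono) auto
      hence "s^2 < \<epsilon>^2 * G s" using Gs by (simp add: power_mult_distrib)
      hence "(pi / L)^2 * s^2 < G s" unfolding \<epsilon>_def using L
        by (simp add: power_divide field_simps)
      also have "\<dots> \<le> s * g s" using Gle[of s] sK K by simp
      finally have "s * ((pi / L)^2 * s) < s * g s" by (simp add: power2_eq_square algebra_simps)
      thus "(pi / L)^2 * s \<le> g s" using sK K by simp
    qed
    define S1 where "S1 = max S0 K"
    define A where "A = \<bar>B\<bar> + (pi / L)^2 * S1 + 1"
    have lpos: "(pi / L)^2 \<ge> 0" by simp
    have S1K: "S1 \<ge> K" "S1 \<ge> S0" unfolding S1_def by auto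
    have "A > 0" unfolding A_def using S1K K lpos
      by (smt (verit) mult_nonneg_nonneg)
    moreover have "\<forall>s\<ge>0. \<forall>x\<in>{-L..L}. f x s \<ge> (pi / L)^2 * s - A"
    proof (intro allI impI ballI)
      fix s x :: real assume s: "0 \<le> s" and x: "x \<in> {-L..L}"
      show "f x s \<ge> (pi / L)^2 * s - A"
      proof (cases "s \<le> K")
        case True
        have "(pi / L)^2 * s \<le> (pi / L)^2 * S1" using True S1K lpos
          by (intro mult_left_mono) auto
        then show ?thesis using fB[OF x s True] unfolding A_def by linarith
      next
        case False
        hence fg': "f x s \<ge> g s" using fg[OF x] by simp
        show ?thesis
        proof (cases "s \<ge> S0")
          case True
          have "0 \<le> (pi / L)^2 * S1" using S1K K lpos by simp
          then show ?thesis using big[OF True] fg' unfolding A_def by linarith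
        next
          case False
          have "(pi / L)^2 * s \<le> (pi / L)^2 * S1" using False S1K lpos
            by (intro mult_left_mono) auto
          then show ?thesis using gpos[OF s] fg' unfolding A_def by linarith
        qed
      qed
    qed
    ultimately show ?thesis by blast
  qed
  show ?thesis using parta partb unfolding G_def by blast
qed

end
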